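(* Let $C=\langle t\rangle$ be the infinite cyclic group and $V$ a finite dimensional $\mathbb{Q}$-vector space. Let $\mathcal{M}=\mathbb{Q}[C]\otimes_{\mathbb{Q}} V$ (a free $\mathbb{Q}[C]$-module) and $\widehat{\mathcal{M}}_I=\mathbb{Q}\llbracket x\rrbracket\otimes_{\mathbb{Q}} V$, regarded as a module over the group $C\otimes\mathbb{Q}=\{t^\alpha\mid\alpha\in\mathbb{Q}\}$, where $t^\alpha$ acts by multiplication by $(1+x)^\alpha=\sum_{n\ge 0}\binom{\alpha}{n}x^n$. Then for every $n\ge 1$, \[H_1(C,\Lambda^n_{\mathbb{Q}}\mathcal{M})=0\qquad\text{and}\qquad H_1(C\otimes\mathbb{Q},\Lambda^n_{\mathbb{Q}}\widehat{\mathcal{M}}_I)=0,\] where the groups act diagonally on exterior powers.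
   Context: $\widehat{\mathcal{M}}_I$ is the $I$-adic completion of $\mathcal{M}$, where $I$ is the augmentation ideal of $\mathbb{Q}[C]$, and is identified with $\mathbb{Q}\llbracket x\rrbracket\otimes V$ via $t\mapsto 1+x$. Here $\binom{\alpha}{n}=\alpha(\alpha-1)\cdots(\alpha-n+1)/n!$. Group homology is with the indicated module coefficients. *)

theory Defs
  imports Complex_Main "HOL-Combinatorics.Permutations" "HOL-Library.Function_Algebras"
begin

text \<open>Chains are finitely supported: C_1 = finitely supported
maps G to A, C_2 = finitely supported maps G x G to A. Convention (Brown, left bar
resolution, left module A):
  d1([g] (x) m) = g^-1 m - m,
  d2([g|h] (x) m) = [h] (x) g^-1 m - [gh] (x) m + [g] (x) m.\<close>

definition bar_d1 :: "('g::ab_group_add \<Rightarrow> 'm::ab_group_add \<Rightarrow> 'm) \<Rightarrow> ('g \<Rightarrow> 'm) \<Rightarrow> 'm" where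
  "bar_d1 act c = (\<Sum>g\<in>{g. c g \<noteq> 0}. act (- g) (c g) - c g)"

definition bar_d2 :: "('g::ab_group_add \<Rightarrow> 'm::ab_group_add \<Rightarrow> 'm) \<Rightarrow> ('g \<times> 'g \<Rightarrow> 'm) \<Rightarrow> ('g \<Rightarrow> 'm)" where
  "bar_d2 act e = (\<lambda>k.
      (\<Sum>p\<in>{p. e p \<noteq> 0 \<and> snd p = k}. act (- fst p) (e p))
    - (\<Sum>p\<in>{p. e p \<noteq> 0 \<and> fst p + snd p = k}. e p)
    + (\<Sum>p\<in>{p. e p \<noteq> 0 \<and> fst p = k}. e p))"

definition H1_vanishes :: "('g::ab_group_add \<Rightarrow> 'm::ab_group_add \<Rightarrow> 'm) \<Rightarrow> 'm set \<Rightarrow> bool" where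
  "H1_vanishes act A \<longleftrightarrow>
     (\<forall>c. finite {g. c g \<noteq> 0} \<and> (\<forall>g. c g \<in> A) \<and> bar_d1 act c = 0 \<longrightarrow>
        (\<exists>e. finite {p. e p \<noteq> 0} \<and> (\<forall>p. e p \<in> A) \<and> bar_d2 act e = c))"

text \<open>Model: w_1 /\ ... /\ w_n is realised as the function
  (phi_1,...,phi_n) |-> det(phi_i(w_j))  on n-tuples of Q-linear functionals
(and 0 on non-linear tuples). Lambda^n W is the Q-span of these; this is
isomorphic to the usual exterior power (the canonical map is injective).\<close>

definition linfun :: "(('a \<Rightarrow> rat) \<Rightarrow> rat) \<Rightarrow> bool" where
  "linfun \<phi> \<longleftrightarrow> (\<forall>u v. \<phi> (\<lambda>a. u a + v a) = \<phi> u + \<phi> v) \<and> (\<forall>q u. \<phi> (\<lambda>a. q * u a) = q * \<phi> u)"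

definition wedge :: "nat \<Rightarrow> (nat \<Rightarrow> ('a \<Rightarrow> rat)) \<Rightarrow> (nat \<Rightarrow> (('a \<Rightarrow> rat) \<Rightarrow> rat)) \<Rightarrow> rat" where
  "wedge n w \<Phi> = (if \<forall>i<n. linfun (\<Phi> i)
      then (\<Sum>p | p permutes {..<n}. of_int (sign p) * (\<Prod>i<n. \<Phi> i (w (p i))))
      else 0)"

definition ext_pow :: "nat \<Rightarrow> ('a \<Rightarrow> rat) set \<Rightarrow> ((nat \<Rightarrow> (('a \<Rightarrow> rat) \<Rightarrow> rat)) \<Rightarrow> rat) set" where
  "ext_pow n W = {F. \<exists>k (c :: nat \<Rightarrow> rat) ws. (\<forall>i<k. \<forall>j<n. ws i j \<in> W) \<and>
                      F = (\<lambda>\<Phi>. \<Sum>i<k. c i * wedge n (ws i) \<Phi>)}"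

text \<open>Diagonal action induced by a linear map g: it sends the wedge of w_1..w_n to
the wedge of g w_1 .. g w_n.\<close>
definition ext_act :: "nat \<Rightarrow> (('a \<Rightarrow> rat) \<Rightarrow> ('a \<Rightarrow> rat)) \<Rightarrow>
     ((nat \<Rightarrow> (('a \<Rightarrow> rat) \<Rightarrow> rat)) \<Rightarrow> rat) \<Rightarrow> ((nat \<Rightarrow> (('a \<Rightarrow> rat) \<Rightarrow> rat)) \<Rightarrow> rat)" where
  "ext_act n g F = (\<lambda>\<Phi>. if \<forall>i<n. linfun (\<Phi> i) then F (\<lambda>i. \<Phi> i \<circ> g) else 0)"

text \<open>V = Q^d with basis e_0..e_{d-1}. M = Q[C] (x) V: an element is the finitely
supported coefficient function (i,m) |-> coefficient of t^m e_i.\<close>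
definition Mfree :: "nat \<Rightarrow> (nat \<times> int \<Rightarrow> rat) set" where
  "Mfree d = {w. finite {a. w a \<noteq> 0} \<and> (\<forall>i m. d \<le> i \<longrightarrow> w (i, m) = 0)}"

definition shiftM :: "int \<Rightarrow> (nat \<times> int \<Rightarrow> rat) \<Rightarrow> (nat \<times> int \<Rightarrow> rat)" where
  "shiftM k w = (\<lambda>(i, m). w (i, m - k))"

text \<open>M^_I = Q[[x]] (x) V: an element is (i,m) |-> coefficient of x^m e_i.\<close>
definition Mhat :: "nat \<Rightarrow> (nat \<times> nat \<Rightarrow> rat) set" where
  "Mhat d = {w. \<forall>i m. d \<le> i \<longrightarrow> w (i, m) = 0}"

definition powM :: "rat \<Rightarrow> (nat \<times> nat \<Rightarrow> rat) \<Rightarrow> (nat \<times> nat \<Rightarrow> rat)" where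
  "powM \<alpha> w = (\<lambda>(i, m). \<Sum>j\<le>m. (\<alpha> gchoose j) * w (i, m - j))"

end

theory Submission
  imports Defs "HOL-Computational_Algebra.Formal_Power_Series"
begin


definition sg1 :: "'g \<Rightarrow> 'm::zero \<Rightarrow> 'g \<Rightarrow> 'm" where
  "sg1 g m = (\<lambda>x. if x = g then m else 0)"

definition fsupp :: "('x \<Rightarrow> 'm::zero) \<Rightarrow> bool" where
  "fsupp c \<longleftrightarrow> finite {x. c x \<noteq> 0}"

lemma sum_fun_app: "(\<Sum>g\<in>S. f g) x = (\<Sum>g\<in>S. f g x)"
  by (induction S rule: infinite_finite_induct) auto

lemma sg1_zero[simp]: "sg1 g 0 = 0"
  by (simp add: sg1_def zero_fun_def)

lemma sg1_add: "sg1 g (a + b) = sg1 g a + sg1 g (b::'m::monoid_add)"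
  by (simp add: sg1_def fun_eq_iff)

lemma ab4: "(a - b) + (c - d) = (a + c) - (b + (d::'a::ab_group_add))"
  by (simp add: algebra_simps)

locale bar_setting =
  fixes act :: "'g::ab_group_add \<Rightarrow> 'm::ab_group_add \<Rightarrow> 'm" and A :: "'m set"
  assumes A0: "0 \<in> A" and Aadd: "x\<in>A \<Longrightarrow> y\<in>A \<Longrightarrow> x+y \<in> A" and Aneg: "x \<in> A \<Longrightarrow> -x \<in> A"
  and act_A: "x\<in>A \<Longrightarrow> act g x \<in> A"
  and act_add: "act g (x+y) = act g x + act g y"
  and act_comp: "x\<in>A \<Longrightarrow> act g (act h x) = act (g+h) x"
begin

lemma act_zero[simp]: "act g 0 = 0"
  using act_add[of g 0 0] by simp

lemma act_neg: "act g (-x) = - act g x"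
  using act_add[of g x "-x"] by (simp add: eq_neg_iff_add_eq_0 add.commute)

lemma act_diff: "act g (x - y) = act g x - act g y"
  using act_add[of g x "-y"] act_neg by simp

lemma Adiff: "x\<in>A \<Longrightarrow> y\<in>A \<Longrightarrow> x-y \<in> A"
  using Aadd Aneg by (metis diff_conv_add_uminus)

lemma d1_eq:
  assumes "finite S" "{x. c x \<noteq> 0} \<subseteq> S"
  shows "bar_d1 act c = (\<Sum>g\<in>S. act (- g) (c g) - c g)"
  unfolding bar_d1_def
  by (rule sum.mono_neutral_left) (use assms in auto)

lemma d2_eq:
  assumes "finite S" "{x. e x \<noteq> 0} \<subseteq> S"
  shows "bar_d2 act e k =
      (\<Sum>p\<in>{p\<in>S. snd p = k}. act (- fst p) (e p))
    - (\<Sum>p\<in>{p\<in>S. fst p + snd p = k}. e p)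
    + (\<Sum>p\<in>{p\<in>S. fst p = k}. e p)"
proof -
  have 1: "(\<Sum>p\<in>{p. e p \<noteq> 0 \<and> snd p = k}. act (- fst p) (e p)) = (\<Sum>p\<in>{p\<in>S. snd p = k}. act (- fst p) (e p))"
    by (rule sum.mono_neutral_left) (use assms in auto)
  have 2: "(\<Sum>p\<in>{p. e p \<noteq> 0 \<and> fst p + snd p = k}. e p) = (\<Sum>p\<in>{p\<in>S. fst p + snd p = k}. e p)"
    by (rule sum.mono_neutral_left) (use assms in auto)
  have 3: "(\<Sum>p\<in>{p. e p \<noteq> 0 \<and> fst p = k}. e p) = (\<Sum>p\<in>{p\<in>S. fst p = k}. e p)"
    by (rule sum.mono_neutral_left) (use assms in auto)
  show ?thesis unfolding bar_d2_def 1 2 3 ..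
qed

lemma fsupp_add: "fsupp (c::'x\<Rightarrow>'m) \<Longrightarrow> fsupp c' \<Longrightarrow> fsupp (c + c')"
  unfolding fsupp_def
  by (rule finite_subset[of _ "{x. c x \<noteq> 0} \<union> {x. c' x \<noteq> 0}"]) (auto simp: fsupp_def)

lemma fsupp_diff: "fsupp (c::'x\<Rightarrow>'m) \<Longrightarrow> fsupp c' \<Longrightarrow> fsupp (c - c')"
  unfolding fsupp_def
  by (rule finite_subset[of _ "{x. c x \<noteq> 0} \<union> {x. c' x \<noteq> 0}"]) (auto simp: fsupp_def)

lemma fsupp_sg1: "fsupp (sg1 g m)"
  unfolding fsupp_def sg1_def by (rule finite_subset[of _ "{g}"]) auto

lemma d1_add: assumes "fsupp c" "fsupp c'"
  shows "bar_d1 act (c + c') = bar_d1 act c + bar_d1 act c'"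
proof -
  let ?S = "{x. c x \<noteq> 0} \<union> {x. c' x \<noteq> 0}"
  have f: "finite ?S" using assms unfolding fsupp_def by auto
  have "bar_d1 act (c + c') = (\<Sum>g\<in>?S. act (- g) ((c+c') g) - (c+c') g)"
    by (rule d1_eq[OF f]) auto
  also have "\<dots> = (\<Sum>g\<in>?S. act (- g) (c g) - c g) + (\<Sum>g\<in>?S. act (- g) (c' g) - c' g)"
    by (simp add: act_add sum.distrib[symmetric] algebra_simps)
  also have "\<dots> = bar_d1 act c + bar_d1 act c'"
    using d1_eq[OF f, of c] d1_eq[OF f, of c'] by auto
  finally show ?thesis .
qed

lemma d1_diff: assumes "fsupp c" "fsupp c'"
  shows "bar_d1 act (c - c') = bar_d1 act c - bar_d1 act c'"
proof -
  let ?S = "{x. c x \<noteq> 0} \<union> {x. c' x \<noteq> 0}"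
  have f: "finite ?S" using assms unfolding fsupp_def by auto
  have "bar_d1 act (c - c') = (\<Sum>g\<in>?S. act (- g) ((c-c') g) - (c-c') g)"
    by (rule d1_eq[OF f]) auto
  also have "\<dots> = (\<Sum>g\<in>?S. act (- g) (c g) - c g) - (\<Sum>g\<in>?S. act (- g) (c' g) - c' g)"
    by (simp add: act_diff sum_subtractf[symmetric] algebra_simps)
  also have "\<dots> = bar_d1 act c - bar_d1 act c'"
    using d1_eq[OF f, of c] d1_eq[OF f, of c'] by auto
  finally show ?thesis .
qed

lemma d1_sg1: "bar_d1 act (sg1 g m) = act (-g) m - m"
  by (subst d1_eq[of "{g}"]) (auto simp: sg1_def)

lemma d2_sg: "bar_d2 act (sg1 (g,h) m) = sg1 h (act (-g) m) - sg1 (g+h) m + sg1 g m"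
proof
  fix k
  have "bar_d2 act (sg1 (g,h) m) k =
      (\<Sum>p\<in>{p\<in>{(g,h)}. snd p = k}. act (- fst p) (sg1 (g,h) m p))
    - (\<Sum>p\<in>{p\<in>{(g,h)}. fst p + snd p = k}. sg1 (g,h) m p)
    + (\<Sum>p\<in>{p\<in>{(g,h)}. fst p = k}. sg1 (g,h) m p)"
    by (rule d2_eq) (auto simp: sg1_def)
  also have "\<dots> = (sg1 h (act (-g) m) - sg1 (g+h) m + sg1 g m) k"
  proof -
    have a: "{p\<in>{(g,h)}. P p} = (if P (g,h) then {(g,h)} else {})" for P by auto
    show ?thesis unfolding a by (auto simp: sg1_def)
  qed
  finally show "bar_d2 act (sg1 (g,h) m) k = (sg1 h (act (-g) m) - sg1 (g+h) m + sg1 g m) k" .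
qed

lemma d2_add: assumes "fsupp e" "fsupp e'"
  shows "bar_d2 act (e + e') = bar_d2 act e + bar_d2 act e'"
proof
  fix k
  let ?S = "{x. e x \<noteq> 0} \<union> {x. e' x \<noteq> 0}"
  have f: "finite ?S" using assms unfolding fsupp_def by auto
  show "bar_d2 act (e + e') k = (bar_d2 act e + bar_d2 act e') k"
  proof -
    have 1: "bar_d2 act (e + e') k = (\<Sum>p\<in>{p\<in>?S. snd p = k}. act (- fst p) ((e + e') p))
      - (\<Sum>p\<in>{p\<in>?S. fst p + snd p = k}. (e + e') p) + (\<Sum>p\<in>{p\<in>?S. fst p = k}. (e + e') p)"
      by (rule d2_eq[OF f]) auto
    have 2: "bar_d2 act e k = (\<Sum>p\<in>{p\<in>?S. snd p = k}. act (- fst p) (e p))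
      - (\<Sum>p\<in>{p\<in>?S. fst p + snd p = k}. e p) + (\<Sum>p\<in>{p\<in>?S. fst p = k}. e p)"
      by (rule d2_eq[OF f]) auto
    have 3: "bar_d2 act e' k = (\<Sum>p\<in>{p\<in>?S. snd p = k}. act (- fst p) (e' p))
      - (\<Sum>p\<in>{p\<in>?S. fst p + snd p = k}. e' p) + (\<Sum>p\<in>{p\<in>?S. fst p = k}. e' p)"
      by (rule d2_eq[OF f]) auto
    show ?thesis unfolding 1 plus_fun_apply 2 3 by (simp add: act_add sum.distrib algebra_simps)
  qed
qed

lemma d2_diff: assumes "fsupp e" "fsupp e'"
  shows "bar_d2 act (e - e') = bar_d2 act e - bar_d2 act e'"
proof
  fix k
  let ?S = "{x. e x \<noteq> 0} \<union> {x. e' x \<noteq> 0}"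
  have f: "finite ?S" using assms unfolding fsupp_def by auto
  show "bar_d2 act (e - e') k = (bar_d2 act e - bar_d2 act e') k"
  proof -
    have 1: "bar_d2 act (e - e') k = (\<Sum>p\<in>{p\<in>?S. snd p = k}. act (- fst p) ((e - e') p))
      - (\<Sum>p\<in>{p\<in>?S. fst p + snd p = k}. (e - e') p) + (\<Sum>p\<in>{p\<in>?S. fst p = k}. (e - e') p)"
      by (rule d2_eq[OF f]) auto
    have 2: "bar_d2 act e k = (\<Sum>p\<in>{p\<in>?S. snd p = k}. act (- fst p) (e p))
      - (\<Sum>p\<in>{p\<in>?S. fst p + snd p = k}. e p) + (\<Sum>p\<in>{p\<in>?S. fst p = k}. e p)"
      by (rule d2_eq[OF f]) auto
    have 3: "bar_d2 act e' k = (\<Sum>p\<in>{p\<in>?S. snd p = k}. act (- fst p) (e' p))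
      - (\<Sum>p\<in>{p\<in>?S. fst p + snd p = k}. e' p) + (\<Sum>p\<in>{p\<in>?S. fst p = k}. e' p)"
      by (rule d2_eq[OF f]) auto
    have dh: "(bar_d2 act e - bar_d2 act e') k = bar_d2 act e k - bar_d2 act e' k" by simp
    show ?thesis unfolding 1 dh 2 3 by (simp add: act_diff sum_subtractf algebra_simps)
  qed
qed

lemma d2_zero: "bar_d2 act 0 = 0"
  unfolding bar_d2_def by auto

definition Bd where
  "Bd = {c. fsupp c \<and> (\<forall>g. c g \<in> A) \<and> bar_d1 act c = 0 \<and>
          (\<exists>e. fsupp e \<and> (\<forall>p. e p \<in> A) \<and> bar_d2 act e = c)}"

lemma Bd_zero: "0 \<in> Bd"
  unfolding Bd_def
  by (auto simp: fsupp_def A0 bar_d1_def intro!: exI[of _ 0] d2_zero)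

lemma Bd_add: "c \<in> Bd \<Longrightarrow> c' \<in> Bd \<Longrightarrow> c + c' \<in> Bd"
  unfolding Bd_def
  apply (clarsimp simp: fsupp_add d1_add Aadd)
  subgoal for e e'
    by (rule exI[of _ "e + e'"]) (auto simp: fsupp_add d2_add Aadd)
  done

lemma Bd_diff: "c \<in> Bd \<Longrightarrow> c' \<in> Bd \<Longrightarrow> c - c' \<in> Bd"
  unfolding Bd_def
  apply (clarsimp simp: fsupp_diff d1_diff Adiff)
  subgoal for e e'
    by (rule exI[of _ "e - e'"]) (auto simp: fsupp_diff d2_diff Adiff)
  done

lemma sg1_A: "m \<in> A \<Longrightarrow> sg1 g m x \<in> A"
  by (auto simp: sg1_def A0)

lemma Bd_sg: assumes "m \<in> A" shows "bar_d2 act (sg1 (g,h) m) \<in> Bd"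
proof -
  have "bar_d1 act (sg1 h (act (-g) m) - sg1 (g+h) m + sg1 g m) = 0"
    using assms
    by (simp only: d1_add d1_diff fsupp_diff fsupp_sg1 d1_sg1 act_comp act_A, simp add: algebra_simps)
  then show ?thesis unfolding Bd_def d2_sg
    using assms
    by (auto simp: fsupp_add fsupp_diff fsupp_sg1 sg1_A act_A Aadd Adiff
             intro!: exI[of _ "sg1 (g,h) m"] d2_sg)
qed

lemma Bd_eq: "c \<in> Bd \<Longrightarrow> c = c' \<Longrightarrow> c' \<in> Bd" by simp

lemma shift_step:
  fixes hh :: "int \<Rightarrow> 'g" assumes hadd: "\<And>a b. hh (a+b) = hh a + hh b"
  shows "\<forall>m\<in>A. \<exists>M\<in>A. sg1 (hh k) m - sg1 (hh 1) M \<in> Bd"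
proof (induction k rule: int_induct[where k=1])
  case base
  show ?case
  proof
    fix m assume "m \<in> A"
    then show "\<exists>M\<in>A. sg1 (hh 1) m - sg1 (hh 1) M \<in> Bd"
      by (intro bexI[of _ m]) (simp_all add: Bd_zero)
  qed
next
  case (step1 i)
  show ?case
  proof
    fix m assume m: "m \<in> A"
    obtain M where M: "M \<in> A" and Y: "sg1 (hh i) m - sg1 (hh 1) M \<in> Bd"
      using step1(2) m by blast
    have X: "bar_d2 act (sg1 (hh i, hh 1) m) \<in> Bd" by (rule Bd_sg[OF m])
    have "sg1 (hh i) m - sg1 (hh 1) M - bar_d2 act (sg1 (hh i, hh 1) m) \<in> Bd"
      by (rule Bd_diff[OF Y X])
    moreover have "sg1 (hh i) m - sg1 (hh 1) M - bar_d2 act (sg1 (hh i, hh 1) m)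
       = sg1 (hh (i+1)) m - sg1 (hh 1) (M + act (- hh i) m)"
      unfolding d2_sg hadd by (auto simp: fun_eq_iff sg1_def)
    ultimately show "\<exists>M\<in>A. sg1 (hh (i+1)) m - sg1 (hh 1) M \<in> Bd"
      using M m by (intro bexI[of _ "M + act (- hh i) m"]) (auto intro: Aadd act_A)
  qed
next
  case (step2 i)
  show ?case
  proof
    fix m assume m: "m \<in> A"
    obtain M where M: "M \<in> A" and Y: "sg1 (hh i) m - sg1 (hh 1) M \<in> Bd"
      using step2(2) m by blast
    have X: "bar_d2 act (sg1 (hh (i-1), hh 1) m) \<in> Bd" by (rule Bd_sg[OF m])
    have hi: "hh (i - 1) + hh 1 = hh i" using hadd[of "i-1" 1] by simp
    have "bar_d2 act (sg1 (hh (i-1), hh 1) m) + (sg1 (hh i) m - sg1 (hh 1) M) \<in> Bd"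
      by (rule Bd_add[OF X Y])
    moreover have "bar_d2 act (sg1 (hh (i-1), hh 1) m) + (sg1 (hh i) m - sg1 (hh 1) M)
       = sg1 (hh (i-1)) m - sg1 (hh 1) (M - act (- hh (i-1)) m)"
      unfolding d2_sg hi by (auto simp: fun_eq_iff sg1_def)
    ultimately show "\<exists>M\<in>A. sg1 (hh (i-1)) m - sg1 (hh 1) M \<in> Bd"
      using M m by (intro bexI[of _ "M - act (- hh (i-1)) m"]) (auto intro: Adiff act_A)
  qed
qed

lemma sum_sg_Bd:
  fixes hh :: "int \<Rightarrow> 'g" assumes hadd: "\<And>a b. hh (a+b) = hh a + hh b"
  and "finite S" "S \<subseteq> range hh" "\<forall>g. c g \<in> A"
  shows "\<exists>M\<in>A. (\<Sum>g\<in>S. sg1 g (c g)) - sg1 (hh 1) M \<in> Bd"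
  using assms(2,3)
proof (induction S rule: finite_induct)
  case empty
  have "(\<Sum>g\<in>{}. sg1 g (c g)) - sg1 (hh 1) 0 = 0" by simp
  then show ?case using Bd_zero A0 by metis
next
  case (insert x F)
  obtain k where k: "x = hh k" using insert by auto
  have "\<forall>m\<in>A. \<exists>M\<in>A. sg1 x m - sg1 (hh 1) M \<in> Bd"
    using shift_step[OF hadd, of k] k by simp
  then obtain M1 where M1: "M1 \<in> A" "sg1 x (c x) - sg1 (hh 1) M1 \<in> Bd"
    using assms(4) by blast
  obtain M2 where M2: "M2 \<in> A" "(\<Sum>g\<in>F. sg1 g (c g)) - sg1 (hh 1) M2 \<in> Bd"
    using insert.IH insert.prems by blast
  have "(sg1 x (c x) - sg1 (hh 1) M1) + ((\<Sum>g\<in>F. sg1 g (c g)) - sg1 (hh 1) M2) \<in> Bd"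
    by (rule Bd_add[OF M1(2) M2(2)])
  moreover have "(sg1 x (c x) - sg1 (hh 1) M1) + ((\<Sum>g\<in>F. sg1 g (c g)) - sg1 (hh 1) M2)
     = (\<Sum>g\<in>insert x F. sg1 g (c g)) - sg1 (hh 1) (M1 + M2)"
  proof -
    have s: "(\<Sum>g\<in>insert x F. sg1 g (c g)) = sg1 x (c x) + (\<Sum>g\<in>F. sg1 g (c g))"
      using insert.hyps by (rule sum.insert)
    show ?thesis unfolding s sg1_add by (rule ab4)
  qed
  ultimately have "(\<Sum>g\<in>insert x F. sg1 g (c g)) - sg1 (hh 1) (M1 + M2) \<in> Bd" by simp
  then show ?case by (rule bexI[OF _ Aadd[OF M1(1) M2(1)]])
qed

lemma sum_sg: assumes "finite S" "{x. c x \<noteq> 0} \<subseteq> S"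
  shows "(\<Sum>g\<in>S. sg1 g (c g)) = c"
proof
  fix x
  have "(\<Sum>g\<in>S. sg1 g (c g)) x = (\<Sum>g\<in>S. sg1 g (c g) x)"
    by (rule sum_fun_app)
  also have "\<dots> = c x"
    using assms by (auto simp: sg1_def sum.delta)
  finally show "(\<Sum>g\<in>S. sg1 g (c g)) x = c x" .
qed

theorem H1_vanishes_cyclic:
  fixes hh :: "int \<Rightarrow> 'g" assumes hadd: "\<And>a b. hh (a+b) = hh a + hh b"
  and noinv: "\<And>M. M \<in> A \<Longrightarrow> act (- hh 1) M = M \<Longrightarrow> M = 0"
  and fin: "finite {g. c g \<noteq> 0}" and cA: "\<forall>g. c g \<in> A" and cyc: "bar_d1 act c = 0"
  and rng: "{g. c g \<noteq> 0} \<subseteq> range hh"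
  shows "\<exists>e. finite {p. e p \<noteq> 0} \<and> (\<forall>p. e p \<in> A) \<and> bar_d2 act e = c"
proof -
  obtain M where M0: "M \<in> A" "(\<Sum>g\<in>{g. c g \<noteq> 0}. sg1 g (c g)) - sg1 (hh 1) M \<in> Bd"
    using sum_sg_Bd[OF hadd fin rng cA] by (elim bexE) (rule that)
  have cs: "(\<Sum>g\<in>{g. c g \<noteq> 0}. sg1 g (c g)) = c" by (rule sum_sg[OF fin]) simp
  have M: "M \<in> A" "c - sg1 (hh 1) M \<in> Bd" using M0 unfolding cs by auto
  have z: "bar_d1 act (c - sg1 (hh 1) M) = 0" using M(2) unfolding Bd_def by auto
  have fs: "fsupp c" using fin unfolding fsupp_def .
  have "bar_d1 act (c - sg1 (hh 1) M) = bar_d1 act c - bar_d1 act (sg1 (hh 1) M)"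
    by (rule d1_diff[OF fs fsupp_sg1])
  then have "act (- hh 1) M - M = 0" using z cyc d1_sg1 by simp
  then have "M = 0" using noinv M(1) by simp
  then have "c \<in> Bd" using M(2) by simp
  then show ?thesis unfolding Bd_def fsupp_def by auto
qed

end


lemma lin_add: "linfun \<phi> \<Longrightarrow> \<phi> (\<lambda>a. u a + v a) = \<phi> u + \<phi> v"
  unfolding linfun_def by blast

lemma lin_smul: "linfun \<phi> \<Longrightarrow> \<phi> (\<lambda>a. q * u a) = q * \<phi> u"
  unfolding linfun_def by blast

lemma lin_zero: assumes "linfun \<phi>" shows "\<phi> (\<lambda>a. 0) = 0"
  using lin_smul[OF assms, of 0 "\<lambda>a. 0"] by simp

lemma lin_sum: assumes "linfun \<phi>"
  shows "\<phi> (\<lambda>a. \<Sum>s\<in>S. r s * u s a) = (\<Sum>s\<in>S. r s * \<phi> (u s))"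
proof (induction S rule: infinite_finite_induct)
  case (infinite A) then show ?case using lin_zero[OF assms] by simp
next
  case empty then show ?case using lin_zero[OF assms] by simp
next
  case (insert x F)
  have "\<phi> (\<lambda>a. \<Sum>s\<in>insert x F. r s * u s a) = \<phi> (\<lambda>a. r x * u x a + (\<Sum>s\<in>F. r s * u s a))"
    using insert by simp
  also have "\<dots> = \<phi> (\<lambda>a. r x * u x a) + \<phi> (\<lambda>a. \<Sum>s\<in>F. r s * u s a)"
    by (rule lin_add[OF assms])
  also have "\<dots> = r x * \<phi> (u x) + (\<Sum>s\<in>F. r s * \<phi> (u s))"
    using insert lin_smul[OF assms, of "r x" "u x"] by simp
  finally show ?case using insert by simp
qed

lemma lin_ev: "linfun (\<lambda>w. w a)"
  unfolding linfun_def by simp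

lemma ep_obtain:
  assumes "F \<in> ext_pow n W"
  obtains k :: nat and c :: "nat \<Rightarrow> rat" and ws where "\<forall>i<k. \<forall>j<n. ws i j \<in> W" "F = (\<lambda>\<Phi>. \<Sum>i<k. c i * wedge n (ws i) \<Phi>)"
  using assms unfolding ext_pow_def mem_Collect_eq by (elim exE conjE) (rule that; assumption)

lemma ep_intro: fixes k :: nat and c :: "nat \<Rightarrow> rat"
  assumes "\<forall>i<k. \<forall>j<n. ws i j \<in> W" "F = (\<lambda>\<Phi>. \<Sum>i<k. c i * wedge n (ws i) \<Phi>)"
  shows "F \<in> ext_pow n W"
  unfolding ext_pow_def using assms by (intro CollectI exI[of _ k] exI[of _ c] exI[of _ ws] conjI)

lemma ep_zero: "0 \<in> ext_pow n W"
  unfolding ext_pow_def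
  by (rule CollectI, rule exI[of _ 0], rule exI[of _ "\<lambda>i. 0"], rule exI[of _ "\<lambda>i j. undefined"])
     (simp add: zero_fun_def)

lemma sum_lessThan_add: "(\<Sum>i<k1+(k2::nat). f i) = (\<Sum>i<k1. f i) + (\<Sum>i<k2. f (k1 + i)) "
  by (induction k2) (auto simp: add.assoc)

lemma ep_add: assumes "F \<in> ext_pow n W" "G \<in> ext_pow n W" shows "F + G \<in> ext_pow n W"
proof -
  obtain k1 :: nat and c1 ws1 where 1: "\<forall>i<k1. \<forall>j<n. ws1 i j \<in> W" "F = (\<lambda>\<Phi>. \<Sum>i<k1. c1 i * wedge n (ws1 i) \<Phi>)"
    using assms(1) by (rule ep_obtain)
  obtain k2 :: nat and c2 ws2 where 2: "\<forall>i<k2. \<forall>j<n. ws2 i j \<in> W" "G = (\<lambda>\<Phi>. \<Sum>i<k2. c2 i * wedge n (ws2 i) \<Phi>)"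
    using assms(2) by (rule ep_obtain)
  define c where "c i = (if i < k1 then c1 i else c2 (i - k1))" for i :: nat
  define ws where "ws i = (if i < k1 then ws1 i else ws2 (i - k1))" for i :: nat
  have "\<forall>i<k1+k2. \<forall>j<n. ws i j \<in> W" using 1 2 unfolding ws_def by auto
  moreover have "F + G = (\<lambda>\<Phi>. \<Sum>i<k1+k2. c i * wedge n (ws i) \<Phi>)"
  proof
    fix \<Phi>
    have a: "(\<Sum>i<k1. c i * wedge n (ws i) \<Phi>) = (\<Sum>i<k1. c1 i * wedge n (ws1 i) \<Phi>)"
      by (rule sum.cong) (auto simp: c_def ws_def)
    have b: "(\<Sum>i<k2. c (k1+i) * wedge n (ws (k1+i)) \<Phi>) = (\<Sum>i<k2. c2 i * wedge n (ws2 i) \<Phi>)"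
      by (simp add: c_def ws_def)
    show "(F + G) \<Phi> = (\<Sum>i<k1+k2. c i * wedge n (ws i) \<Phi>)"
      unfolding sum_lessThan_add a b unfolding 1 2 by simp
  qed
  ultimately show ?thesis by (rule ep_intro)
qed

lemma ep_neg: assumes "F \<in> ext_pow n W" shows "- F \<in> ext_pow n W"
proof -
  obtain k :: nat and c ws where 1: "\<forall>i<k. \<forall>j<n. ws i j \<in> W" "F = (\<lambda>\<Phi>. \<Sum>i<k. c i * wedge n (ws i) \<Phi>)"
    using assms(1) by (rule ep_obtain)
  have "- F = (\<lambda>\<Phi>. \<Sum>i<k. (- c i) * wedge n (ws i) \<Phi>)"
    unfolding 1 by (simp add: fun_eq_iff sum_negf[symmetric])
  then show ?thesis by (rule ep_intro[OF 1(1)])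
qed

lemma wedge_dep: assumes "\<forall>i<n. \<Phi> i = \<Phi>' i" shows "wedge n w \<Phi> = wedge n w \<Phi>'"
proof -
  have "(\<Prod>i<n. \<Phi> i (w (p i))) = (\<Prod>i<n. \<Phi>' i (w (p i)))" for p
    using assms by (intro prod.cong) auto
  then have S: "(\<Sum>p | p permutes {..<n}. of_int (sign p) * (\<Prod>i<n. \<Phi> i (w (p i))))
     = (\<Sum>p | p permutes {..<n}. of_int (sign p) * (\<Prod>i<n. \<Phi>' i (w (p i))))" by simp
  have P: "(\<forall>i<n. linfun (\<Phi> i)) = (\<forall>i<n. linfun (\<Phi>' i))" using assms by auto
  show ?thesis unfolding wedge_def S P ..
qed

lemma ep_dep: assumes "F \<in> ext_pow n W" "\<forall>i<n. \<Phi> i = \<Phi>' i" shows "F \<Phi> = F \<Phi>'"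
proof -
  obtain k :: nat and c ws where 1: "F = (\<lambda>\<Phi>. \<Sum>i<k. c i * wedge n (ws i) \<Phi>)"
    using assms(1) by (rule ep_obtain)
  show ?thesis unfolding 1 using wedge_dep[OF assms(2)] by simp
qed

lemma wedge_nonlin: "\<not> (\<forall>i<n. linfun (\<Phi> i)) \<Longrightarrow> wedge n w \<Phi> = 0"
  unfolding wedge_def by (rule if_not_P)

lemma ep_nonlin: assumes "F \<in> ext_pow n W" "\<not> (\<forall>i<n. linfun (\<Phi> i))" shows "F \<Phi> = 0"
proof -
  obtain k :: nat and c ws where 1: "F = (\<lambda>\<Phi>. \<Sum>i<k. c i * wedge n (ws i) \<Phi>)"
    using assms(1) by (rule ep_obtain)
  show ?thesis unfolding 1 wedge_nonlin[OF assms(2)] by simp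
qed

definition linpres where "linpres g \<longleftrightarrow> (\<forall>\<phi>. linfun \<phi> \<longrightarrow> linfun (\<phi> \<circ> g))"

lemma linpresD: "linpres g \<Longrightarrow> linfun \<phi> \<Longrightarrow> linfun (\<phi> \<circ> g)"
  unfolding linpres_def by blast

lemma wedge_act: assumes "linpres g" "\<forall>i<n. linfun (\<Phi> i)"
  shows "wedge n w (\<lambda>i. \<Phi> i \<circ> g) = wedge n (g \<circ> w) \<Phi>"
proof -
  have "\<forall>i<n. linfun (\<Phi> i \<circ> g)" using linpresD[OF assms(1)] assms(2) by blast
  then show ?thesis using assms(2) unfolding wedge_def by simp
qed

lemma ext_act_ep: assumes "linpres g" "g ` W \<subseteq> W" "F \<in> ext_pow n W"
  shows "ext_act n g F \<in> ext_pow n W"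
proof -
  obtain k :: nat and c ws where 1: "\<forall>i<k. \<forall>j<n. ws i j \<in> W" "F = (\<lambda>\<Phi>. \<Sum>i<k. c i * wedge n (ws i) \<Phi>)"
    using assms(3) by (rule ep_obtain)
  have E: "ext_act n g F = (\<lambda>\<Phi>. \<Sum>i<k. c i * wedge n (g \<circ> ws i) \<Phi>)"
  proof
    fix \<Phi>
    show "ext_act n g F \<Phi> = (\<Sum>i<k. c i * wedge n (g \<circ> ws i) \<Phi>)"
    proof (cases "\<forall>i<n. linfun (\<Phi> i)")
      case True
      then show ?thesis unfolding 1 ext_act_def using wedge_act[OF assms(1) True] by simp
    next
      case False
      show ?thesis unfolding ext_act_def if_not_P[OF False] wedge_nonlin[OF False] by simp
    qed
  qed
  have "\<forall>i<k. \<forall>j<n. (g \<circ> ws i) j \<in> W" using 1 assms(2) by auto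
  then show ?thesis using E by (rule ep_intro)
qed

lemma ext_act_add: "ext_act n g (F + G) = ext_act n g F + ext_act n g G"
  unfolding ext_act_def by (auto simp: fun_eq_iff)

lemma ext_act_comp: assumes "linpres g"
  shows "ext_act n g (ext_act n h F) = ext_act n (g \<circ> h) F"
proof
  fix \<Phi>
  show "ext_act n g (ext_act n h F) \<Phi> = ext_act n (g \<circ> h) F \<Phi>"
  proof (cases "\<forall>i<n. linfun (\<Phi> i)")
    case True
    have L: "\<forall>i<n. linfun (\<Phi> i \<circ> g)" using True linpresD[OF assms] by blast
    show ?thesis unfolding ext_act_def if_P[OF True] if_P[OF L] by (simp add: comp_assoc)
  next
    case False
    show ?thesis unfolding ext_act_def if_not_P[OF False] by simp
  qed
qed



lemma wedge_row:
  assumes k: "k < n" and lin: "\<forall>i<n. i \<noteq> k \<longrightarrow> linfun (\<Phi> i)" and psi: "linfun \<Psi>"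
  shows "wedge n w (\<Phi>(k:=\<Psi>)) = \<Psi> (\<lambda>a. \<Sum>p\<in>{p. p permutes {..<n}}.
            (of_int (sign p) * (\<Prod>j\<in>{..<n}-{k}. \<Phi> j (w (p j)))) * w (p k) a)"
proof -
  have L: "\<forall>i<n. linfun ((\<Phi>(k:=\<Psi>)) i)" using lin psi by (auto simp: fun_upd_apply)
  have P: "(\<Prod>i<n. (\<Phi>(k:=\<Psi>)) i (w (p i))) = \<Psi> (w (p k)) * (\<Prod>j\<in>{..<n}-{k}. \<Phi> j (w (p j)))" for p
  proof -
    have "(\<Prod>i<n. (\<Phi>(k:=\<Psi>)) i (w (p i))) = (\<Phi>(k:=\<Psi>)) k (w (p k)) * (\<Prod>i\<in>{..<n}-{k}. (\<Phi>(k:=\<Psi>)) i (w (p i)))"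
      by (rule prod.remove) (use k in auto)
    also have "(\<Prod>i\<in>{..<n}-{k}. (\<Phi>(k:=\<Psi>)) i (w (p i))) = (\<Prod>j\<in>{..<n}-{k}. \<Phi> j (w (p j)))"
      by (rule prod.cong) auto
    finally show ?thesis by simp
  qed
  have "wedge n w (\<Phi>(k:=\<Psi>)) = (\<Sum>p | p permutes {..<n}. of_int (sign p) * (\<Prod>i<n. (\<Phi>(k:=\<Psi>)) i (w (p i))))"
    unfolding wedge_def if_P[OF L] ..
  also have "\<dots> = (\<Sum>p\<in>{p. p permutes {..<n}}. (of_int (sign p) * (\<Prod>j\<in>{..<n}-{k}. \<Phi> j (w (p j)))) * \<Psi> (w (p k)))"
    unfolding P by (simp add: mult_ac)
  also have "\<dots> = \<Psi> (\<lambda>a. \<Sum>p\<in>{p. p permutes {..<n}}.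
            (of_int (sign p) * (\<Prod>j\<in>{..<n}-{k}. \<Phi> j (w (p j)))) * w (p k) a)"
    by (rule lin_sum[OF psi, symmetric])
  finally show ?thesis .
qed

lemma ep_row:
  assumes F: "F \<in> ext_pow n W" and k: "k < n" and lin: "\<forall>i<n. i \<noteq> k \<longrightarrow> linfun (\<Phi> i)"
  shows "\<exists>u. \<forall>\<Psi>. linfun \<Psi> \<longrightarrow> F (\<Phi>(k:=\<Psi>)) = \<Psi> u"
proof -
  obtain K :: nat and c ws where 1: "F = (\<lambda>\<Phi>. \<Sum>i<K. c i * wedge n (ws i) \<Phi>)"
    using F by (rule ep_obtain)
  define U where "U i = (\<lambda>a. \<Sum>p\<in>{p. p permutes {..<n}}.
            (of_int (sign p) * (\<Prod>j\<in>{..<n}-{k}. \<Phi> j (ws i (p j)))) * ws i (p k) a)" for i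
  show ?thesis
  proof (intro exI allI impI)
    fix \<Psi> :: "('a \<Rightarrow> rat) \<Rightarrow> rat" assume psi: "linfun \<Psi>"
    have "F (\<Phi>(k:=\<Psi>)) = (\<Sum>i<K. c i * \<Psi> (U i))"
      unfolding 1 U_def using wedge_row[OF k lin psi] by simp
    also have "\<dots> = \<Psi> (\<lambda>a. \<Sum>i<K. c i * U i a)"
      by (rule lin_sum[OF psi, symmetric])
    finally show "F (\<Phi>(k:=\<Psi>)) = \<Psi> (\<lambda>a. \<Sum>i<K. c i * U i a)" .
  qed
qed

lemma ep_vanish:
  assumes F: "F \<in> ext_pow n W" and Z: "\<And>a. F (\<lambda>i. (\<lambda>w. w (a i))) = 0"
  shows "F \<Phi> = 0"
proof -
  have main: "r \<le> n \<Longrightarrow> (\<forall>i<n. linfun (\<Phi> i)) \<Longrightarrow> (\<forall>i. r \<le> i \<and> i < n \<longrightarrow> (\<exists>a. \<Phi> i = (\<lambda>w. w a))) \<Longrightarrow> F \<Phi> = 0"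
    for r \<Phi>
  proof (induction r arbitrary: \<Phi>)
    case 0
    define a where "a i = (SOME a. \<Phi> i = (\<lambda>w. w a))" for i
    have "\<forall>i<n. \<Phi> i = (\<lambda>w. w (a i))"
    proof (intro allI impI)
      fix i assume "i < n"
      then have "\<exists>a. \<Phi> i = (\<lambda>w. w a)" using 0 by auto
      then show "\<Phi> i = (\<lambda>w. w (a i))" unfolding a_def by (rule someI_ex)
    qed
    then have "F \<Phi> = F (\<lambda>i. (\<lambda>w. w (a i)))" by (rule ep_dep[OF F])
    then show ?case using Z by simp
  next
    case (Suc r)
    have rn: "r < n" using Suc by simp
    have lin: "\<forall>i<n. i \<noteq> r \<longrightarrow> linfun (\<Phi> i)" using Suc by simp
    from ep_row[OF F rn lin] obtain u where u: "\<forall>\<Psi>. linfun \<Psi> \<longrightarrow> F (\<Phi>(r:=\<Psi>)) = \<Psi> u" ..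
    have linr: "linfun (\<Phi> r)" using Suc.prems(2) rn by simp
    have "u a = 0" for a
    proof -
      have "F (\<Phi>(r:=(\<lambda>w. w a))) = 0"
      proof (rule Suc.IH)
        show "r \<le> n" using rn by simp
        show "\<forall>i<n. linfun ((\<Phi>(r:=(\<lambda>w. w a))) i)" using Suc.prems(2) lin_ev by (auto simp: fun_upd_apply)
        show "\<forall>i. r \<le> i \<and> i < n \<longrightarrow> (\<exists>b. (\<Phi>(r:=(\<lambda>w. w a))) i = (\<lambda>w. w b))"
        proof (intro allI impI)
          fix i assume i: "r \<le> i \<and> i < n"
          show "\<exists>b. (\<Phi>(r:=(\<lambda>w. w a))) i = (\<lambda>w. w b)"
          proof (cases "i = r")
            case True then show ?thesis by auto
          next
            case False then show ?thesis using Suc.prems(3) i by auto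
          qed
        qed
      qed
      moreover have "F (\<Phi>(r:=(\<lambda>w. w a))) = u a" using mp[OF spec[OF u, of "(\<lambda>w. w a)"] lin_ev] by simp
      ultimately show ?thesis by simp
    qed
    then have u0: "u = (\<lambda>a. 0)" by auto
    have "F \<Phi> = F (\<Phi>(r:=\<Phi> r))" by simp
    also have "\<dots> = \<Phi> r u" by (rule mp[OF spec[OF u, of "\<Phi> r"] linr])
    also have "\<dots> = 0" unfolding u0 by (rule lin_zero[OF linr])
    finally show ?case .
  qed
  show ?thesis
  proof (cases "\<forall>i<n. linfun (\<Phi> i)")
    case True
    have "\<forall>i. n \<le> i \<and> i < n \<longrightarrow> (\<exists>a. \<Phi> i = (\<lambda>w. w a))" by auto
    then show ?thesis using main[of n \<Phi>] True by blast
  next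
    case False
    then show ?thesis by (rule ep_nonlin[OF F])
  qed
qed



lemma linpresI:
  fixes g :: "('a \<Rightarrow> rat) \<Rightarrow> ('b \<Rightarrow> rat)"
  assumes A: "\<And>u v. g (\<lambda>a. u a + v a) = (\<lambda>a. g u a + g v a)"
      and S: "\<And>q u. g (\<lambda>a. q * u a) = (\<lambda>a. q * g u a)"
  shows "linpres g"
  unfolding linpres_def
proof (intro allI impI)
  fix \<phi> :: "('b \<Rightarrow> rat) \<Rightarrow> rat" assume p: "linfun \<phi>"
  show "linfun (\<phi> \<circ> g)" unfolding linfun_def comp_def A S
    using lin_add[OF p] lin_smul[OF p] by simp
qed

lemma shiftM_apply: "shiftM k w x = w (fst x, snd x - k)"
  unfolding shiftM_def by (simp add: case_prod_beta)

lemma shiftM_comp: "shiftM a \<circ> shiftM b = shiftM (a + b)"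
  by (simp add: fun_eq_iff shiftM_apply diff_diff_eq)

lemma linpres_shiftM: "linpres (shiftM k)"
  by (rule linpresI) (simp_all add: fun_eq_iff shiftM_apply)

lemma shiftM_Mfree: "shiftM k ` Mfree d \<subseteq> Mfree d"
proof
  fix x assume "x \<in> shiftM k ` Mfree d"
  then obtain w where w: "w \<in> Mfree d" "x = shiftM k w" by blast
  have "{a. x a \<noteq> 0} \<subseteq> (\<lambda>a. (fst a, snd a + k)) ` {a. w a \<noteq> 0}"
  proof
    fix a assume "a \<in> {a. x a \<noteq> 0}"
    then have "w (fst a, snd a - k) \<noteq> 0" using w by (simp add: shiftM_apply)
    then show "a \<in> (\<lambda>a. (fst a, snd a + k)) ` {a. w a \<noteq> 0}"
      by (intro image_eqI[of _ _ "(fst a, snd a - k)"]) auto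
  qed
  then have "finite {a. x a \<noteq> 0}" using w(1) unfolding Mfree_def
    by (auto intro: finite_subset)
  moreover have "\<forall>i m. d \<le> i \<longrightarrow> x (i, m) = 0" using w unfolding Mfree_def by (simp add: shiftM_apply)
  ultimately show "x \<in> Mfree d" unfolding Mfree_def by blast
qed

lemma noinv1:
  assumes n: "1 \<le> n" and F: "F \<in> ext_pow n (Mfree d)" and inv: "ext_act n (shiftM (-1)) F = F"
  shows "F = 0"
proof -
  define f where "f a = F (\<lambda>i. (\<lambda>w. w (a i)))" for a :: "nat \<Rightarrow> nat \<times> int"
  have step: "f (\<lambda>j. (fst (a j), snd (a j) + 1)) = f a" for a
  proof -
    have L: "\<forall>i<n. linfun ((\<lambda>i. (\<lambda>w. w (a i))) i)" by (intro allI impI lin_ev)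
    have "f a = ext_act n (shiftM (-1)) F (\<lambda>i. (\<lambda>w. w (a i)))" using inv unfolding f_def by simp
    also have "\<dots> = F (\<lambda>i. (\<lambda>w. w (a i)) \<circ> shiftM (-1))"
      unfolding ext_act_def if_P[OF L] ..
    also have "(\<lambda>i. (\<lambda>w. w (a i)) \<circ> shiftM (-1)) = (\<lambda>i. (\<lambda>w. w (fst (a i), snd (a i) + 1)))"
      by (simp add: fun_eq_iff shiftM_apply)
    finally show ?thesis unfolding f_def by simp
  qed
  have iter: "f (\<lambda>j. (fst (a j), snd (a j) + int t)) = f a" for a t
  proof (induction t)
    case 0 then show ?case by simp
  next
    case (Suc t)
    have "f (\<lambda>j. (fst (a j), snd (a j) + int (Suc t))) = f (\<lambda>j. (fst ((\<lambda>j. (fst (a j), snd (a j) + int t)) j), snd ((\<lambda>j. (fst (a j), snd (a j) + int t)) j) + 1))"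
      by (simp add: ac_simps)
    also have "\<dots> = f (\<lambda>j. (fst (a j), snd (a j) + int t))" by (rule step)
    finally show ?case using Suc by simp
  qed
  obtain K :: nat and c ws where 1: "\<forall>i<K. \<forall>j<n. ws i j \<in> Mfree d" "F = (\<lambda>\<Phi>. \<Sum>i<K. c i * wedge n (ws i) \<Phi>)"
    using F by (rule ep_obtain)
  define S where "S = (\<Union>i<K. \<Union>j<n. {x. ws i j x \<noteq> 0})"
  have finS: "finite S" unfolding S_def using 1(1) unfolding Mfree_def by auto
  have zero: "f a = 0" if a0: "a 0 \<notin> S" for a
  proof -
    have L: "\<forall>i<n. linfun ((\<lambda>i. (\<lambda>w. w (a i))) i)" by (intro allI impI lin_ev)
    have "wedge n (ws i) (\<lambda>i. (\<lambda>w. w (a i))) = 0" if i: "i < K" for i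
    proof -
      have pz: "(\<Prod>l<n. ws i (p l) (a l)) = 0" if p: "p permutes {..<n}" for p
      proof (rule prod_zero)
        have "p 0 < n" using permutes_in_image[OF p, of 0] n by simp
        then have "ws i (p 0) (a 0) = 0" using a0 i unfolding S_def by auto
        then show "\<exists>l\<in>{..<n}. ws i (p l) (a l) = 0" using n by (intro bexI[of _ 0]) auto
      qed simp
      show ?thesis unfolding wedge_def if_P[OF L]
      proof (intro sum.neutral ballI)
        fix p assume "p \<in> {p. p permutes {..<n}}"
        then have "p permutes {..<n}" by simp
        then show "of_int (sign p) * (\<Prod>l<n. (\<lambda>i. (\<lambda>w. w (a i))) l (ws i (p l))) = 0"
          using pz by simp
      qed
    qed
    then show ?thesis unfolding f_def 1 by simp
  qed
  have fz: "f a = 0" for a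
  proof -
    obtain B where B: "\<forall>x\<in>snd ` S. x \<le> B" using bdd_above_finite[of "snd ` S"] finS
      unfolding bdd_above_def by auto
    define t where "t = nat (B + 1 - snd (a 0))"
    have "snd (a 0) + int t > B" unfolding t_def by simp
    then have "(fst (a 0), snd (a 0) + int t) \<notin> S" using B by force
    then have "f (\<lambda>j. (fst (a j), snd (a j) + int t)) = 0" by (intro zero) simp
    then show ?thesis using iter by simp
  qed
  have "F \<Phi> = 0" for \<Phi>
    by (rule ep_vanish[OF F]) (use fz f_def in simp)
  then show ?thesis by (simp add: fun_eq_iff)
qed



lemma powM_apply: "powM \<beta> w x = (\<Sum>j\<le>snd x. (\<beta> gchoose j) * w (fst x, snd x - j))"
  unfolding powM_def by (simp add: case_prod_beta)

lemma powM_comp: "powM \<alpha> \<circ> powM \<beta> = powM (\<alpha> + \<beta>)"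
proof (intro ext)
  fix w :: "nat \<times> nat \<Rightarrow> rat" and x :: "nat \<times> nat"
  obtain i m where x: "x = (i, m)" by (cases x)
  define g where "g j l = (\<alpha> gchoose j) * (\<beta> gchoose l) * w (i, m - (j + l))" for j l
  have "(powM \<alpha> \<circ> powM \<beta>) w x = (\<Sum>j\<le>m. (\<alpha> gchoose j) * (\<Sum>l\<le>m-j. (\<beta> gchoose l) * w (i, m - j - l)))"
    by (simp add: x powM_apply)
  also have "\<dots> = (\<Sum>j\<le>m. \<Sum>l\<le>m-j. g j l)"
    unfolding g_def by (simp add: sum_distrib_left mult.assoc diff_diff_eq)
  also have "\<dots> = (\<Sum>(j,l)\<in>Sigma {..m} (\<lambda>j. {..m-j}). g j l)"
    by (rule sum.Sigma) auto
  also have "Sigma {..m} (\<lambda>j. {..m-j}) = {(j,l). j + l \<le> m}" by auto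
  also have "(\<Sum>(j,l)\<in>{(j,l). j + l \<le> m}. g j l) = (\<Sum>s\<le>m. \<Sum>j\<le>s. g j (s - j))"
    by (rule sum.triangle_reindex_eq)
  also have "\<dots> = (\<Sum>s\<le>m. ((\<alpha> + \<beta>) gchoose s) * w (i, m - s))"
  proof (rule sum.cong)
    fix s assume "s \<in> {..m}"
    have "(\<Sum>j\<le>s. g j (s - j)) = (\<Sum>j\<le>s. (\<alpha> gchoose j) * (\<beta> gchoose (s - j))) * w (i, m - s)"
      unfolding g_def by (simp add: sum_distrib_right)
    also have "(\<Sum>j\<le>s. (\<alpha> gchoose j) * (\<beta> gchoose (s - j))) = (\<alpha> + \<beta>) gchoose s"
      using gbinomial_Vandermonde[of \<alpha> \<beta> s] by (simp add: atMost_atLeast0)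
    finally show "(\<Sum>j\<le>s. g j (s - j)) = ((\<alpha> + \<beta>) gchoose s) * w (i, m - s)" .
  qed simp
  also have "\<dots> = powM (\<alpha> + \<beta>) w x" by (simp add: x powM_apply)
  finally show "(powM \<alpha> \<circ> powM \<beta>) w x = powM (\<alpha> + \<beta>) w x" .
qed

lemma linpres_powM: "linpres (powM \<beta>)"
  by (rule linpresI) (simp_all add: fun_eq_iff powM_apply sum.distrib sum_distrib_left algebra_simps)

lemma powM_Mhat: "powM \<beta> ` Mhat d \<subseteq> Mhat d"
  unfolding Mhat_def by (auto simp: powM_apply)

lemma deg_upd:
  fixes a :: "nat \<Rightarrow> nat \<times> nat"
  assumes "k < n"
  shows "(\<Sum>i<n. snd ((a(k:=v)) i)) + snd (a k) = (\<Sum>i<n. snd (a i)) + snd v"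
proof -
  have 1: "(\<Sum>i<n. snd ((a(k:=v)) i)) = snd v + (\<Sum>i\<in>{..<n}-{k}. snd ((a(k:=v)) i))"
    using assms by (subst sum.remove[of _ k]) auto
  have 2: "(\<Sum>i<n. snd (a i)) = snd (a k) + (\<Sum>i\<in>{..<n}-{k}. snd (a i))"
    using assms by (subst sum.remove[of _ k]) auto
  have 3: "(\<Sum>i\<in>{..<n}-{k}. snd ((a(k:=v)) i)) = (\<Sum>i\<in>{..<n}-{k}. snd (a i))"
    by (rule sum.cong) auto
  show ?thesis unfolding 1 2 3 by simp
qed

lemma sum_two: "(\<Sum>j\<le>(m::nat). (if j = 0 then X else if j = 1 then Y else (0::'a::comm_monoid_add)))
   = X + (if 1 \<le> m then Y else 0)"
proof (cases m)
  case 0 then show ?thesis by simp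
next
  case (Suc m')
  have "(\<Sum>j\<le>m'. (if Suc j = 1 then Y else 0)) = Y" by (simp add: sum.delta')
  then show ?thesis unfolding Suc sum.atMost_Suc_shift by simp
qed



lemma noinv2:
  assumes n: "1 \<le> n" and F: "F \<in> ext_pow n (Mhat d)" and \<beta>: "\<beta> \<noteq> 0"
    and inv: "ext_act n (powM \<beta>) F = F"
  shows "F = 0"
proof -
  define f where "f a = F (\<lambda>i. (\<lambda>w. w (a i)))" for a :: "nat \<Rightarrow> nat \<times> nat"
  define h where "h r a = F (\<lambda>k. if k < r then (\<lambda>w. w (a k)) \<circ> powM \<beta> else (\<lambda>w. w (a k)))"
    for r :: nat and a :: "nat \<Rightarrow> nat \<times> nat"
  define deg where "deg a = (\<Sum>i<n. snd (a i))" for a :: "nat \<Rightarrow> nat \<times> nat"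
  have lev: "linfun ((\<lambda>w. w x) \<circ> powM \<beta>)" for x :: "nat \<times> nat"
    by (rule linpresD[OF linpres_powM lin_ev])
  have hstep: "h (Suc r) a = (\<Sum>j\<le>snd (a r). (\<beta> gchoose j) * h r (a(r := (fst (a r), snd (a r) - j))))"
    if r: "r < n" for r a
  proof -
    define \<Phi> where "\<Phi> = (\<lambda>k. if k < r then (\<lambda>w. w (a k)) \<circ> powM \<beta> else (\<lambda>w. (w (a k) :: rat)))"
    have lin: "\<forall>i<n. i \<noteq> r \<longrightarrow> linfun (\<Phi> i)" unfolding \<Phi>_def by (auto intro: lev lin_ev)
    from ep_row[OF F r lin] obtain u where u: "\<forall>\<Psi>. linfun \<Psi> \<longrightarrow> F (\<Phi>(r:=\<Psi>)) = \<Psi> u" ..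
    have e1: "(\<lambda>k. if k < Suc r then (\<lambda>w. w (a k)) \<circ> powM \<beta> else (\<lambda>w. w (a k))) = \<Phi>(r := (\<lambda>w. w (a r)) \<circ> powM \<beta>)"
      unfolding \<Phi>_def by (auto simp: fun_eq_iff)
    have "h (Suc r) a = ((\<lambda>w. w (a r)) \<circ> powM \<beta>) u"
      unfolding h_def e1 by (rule mp[OF spec[OF u] lev])
    also have "\<dots> = (\<Sum>j\<le>snd (a r). (\<beta> gchoose j) * u (fst (a r), snd (a r) - j))"
      by (simp add: powM_apply)
    also have "\<dots> = (\<Sum>j\<le>snd (a r). (\<beta> gchoose j) * h r (a(r := (fst (a r), snd (a r) - j))))"
    proof (rule sum.cong[OF refl])
      fix j
      define v where "v = (fst (a r), snd (a r) - j)"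
      have e2: "(\<lambda>k. if k < r then (\<lambda>w. w ((a(r:=v)) k)) \<circ> powM \<beta> else (\<lambda>w. w ((a(r:=v)) k))) = \<Phi>(r := (\<lambda>w. w v))"
        unfolding \<Phi>_def by (auto simp: fun_eq_iff)
      have "h r (a(r:=v)) = u v"
        unfolding h_def e2 using mp[OF spec[OF u, of "\<lambda>w. w v"] lin_ev] by simp
      then show "(\<beta> gchoose j) * u (fst (a r), snd (a r) - j) = (\<beta> gchoose j) * h r (a(r := (fst (a r), snd (a r) - j)))"
        unfolding v_def by simp
    qed
    finally show ?thesis .
  qed
  have hn: "h n a = f a" for a
  proof -
    have L: "\<forall>i<n. linfun ((\<lambda>i. (\<lambda>w. w (a i))) i)" by (intro allI impI lin_ev)
    have "h n a = F (\<lambda>k. (\<lambda>w. w (a k)) \<circ> powM \<beta>)"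
      unfolding h_def by (rule ep_dep[OF F]) simp
    also have "\<dots> = ext_act n (powM \<beta>) F (\<lambda>i. (\<lambda>w. w (a i)))"
      unfolding ext_act_def if_P[OF L] ..
    also have "\<dots> = f a" unfolding inv f_def ..
    finally show ?thesis .
  qed
  have h0: "h 0 a = f a" for a unfolding h_def f_def by simp
  have fz: "f a = 0" for a
  proof (rule ccontr)
    assume "f a \<noteq> 0"
    then have ex: "\<exists>D a. f a \<noteq> 0 \<and> deg a = D" by blast
    define D where "D = (LEAST D. \<exists>a. f a \<noteq> 0 \<and> deg a = D)"
    have hD: "\<exists>a. f a \<noteq> 0 \<and> deg a = D" unfolding D_def using ex by (rule LeastI_ex)
    have below: "f b = 0" if "deg b < D" for b
    proof (rule ccontr)
      assume "f b \<noteq> 0"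
      then have "D \<le> deg b" unfolding D_def by (intro Least_le) blast
      then show False using that by simp
    qed
    define lower where "lower k b = b(k := (fst (b k), snd (b k) - 1))" for k :: nat and b :: "nat \<Rightarrow> nat \<times> nat"
    define L where "L k b = (if 1 \<le> snd (b k) then f (lower k b) else 0)" for k :: nat and b :: "nat \<Rightarrow> nat \<times> nat"
    have deg_lower: "deg (lower k b) + 1 = deg b" if "k < n" "1 \<le> snd (b k)" for k b
      using deg_upd[OF that(1), of b "(fst (b k), snd (b k) - 1)"] that(2)
      unfolding deg_def lower_def by simp
    have Lz: "L k b = 0" if "k < n" "deg b \<le> D" for k b
    proof (cases "1 \<le> snd (b k)")
      case True
      then have "deg (lower k b) < D" using deg_lower[of k b] that True by simp
      then show ?thesis unfolding L_def using below by simp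
    next
      case False then show ?thesis unfolding L_def by simp
    qed
    have claim: "r \<le> n \<Longrightarrow> deg b \<le> D + 1 \<Longrightarrow> h r b = f b + \<beta> * (\<Sum>k<r. L k b)" for r b
    proof (induction r arbitrary: b)
      case 0 then show ?case using h0 by simp
    next
      case (Suc r)
      have r: "r < n" using Suc.prems by simp
      define m where "m = snd (b r)"
      define bj where "bj j = b(r := (fst (b r), m - j))" for j
      have deg_bj: "deg (bj j) + j = deg b" if "j \<le> m" for j
        using deg_upd[OF r, of b "(fst (b r), m - j)"] that unfolding deg_def bj_def m_def by simp
      have tm: "(\<beta> gchoose j) * h r (bj j) = (if j = 0 then h r b else if j = 1 then \<beta> * f (lower r b) else 0)"
        if j: "j \<in> {..m}" for j
      proof -
        have jm: "j \<le> m" using j by simp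
        have IH: "h r (bj j) = f (bj j) + \<beta> * (\<Sum>k<r. L k (bj j))"
          using Suc.IH[of "bj j"] Suc.prems deg_bj[OF jm] r by simp
        show ?thesis
        proof (cases "j = 0")
          case True
          have "bj 0 = b" unfolding bj_def m_def by simp
          then show ?thesis using True by simp
        next
          case False
          have dle: "deg (bj j) \<le> D" using deg_bj[OF jm] Suc.prems(2) False by simp
          have "(\<Sum>k<r. L k (bj j)) = 0" using Lz dle r by simp
          then have hb: "h r (bj j) = f (bj j)" using IH by simp
          show ?thesis
          proof (cases "j = 1")
            case True
            have "bj 1 = lower r b" unfolding bj_def lower_def m_def by simp
            then show ?thesis using True hb by simp
          next
            case False2: False
            have "deg (bj j) < D" using deg_bj[OF jm] Suc.prems(2) False False2 by simp
            then show ?thesis using hb below False False2 by simp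
          qed
        qed
      qed
      have "h (Suc r) b = (\<Sum>j\<le>m. (\<beta> gchoose j) * h r (bj j))"
        unfolding hstep[OF r] bj_def m_def ..
      also have "\<dots> = (\<Sum>j\<le>m. (if j = 0 then h r b else if j = 1 then \<beta> * f (lower r b) else 0))"
        by (rule sum.cong[OF refl tm])
      also have "\<dots> = h r b + (if 1 \<le> m then \<beta> * f (lower r b) else 0)" by (rule sum_two)
      also have "\<dots> = h r b + \<beta> * L r b" unfolding L_def m_def by simp
      also have "h r b = f b + \<beta> * (\<Sum>k<r. L k b)" using Suc.IH Suc.prems r by simp
      finally show ?case by (simp add: algebra_simps)
    qed
    have sumL: "(\<Sum>k<n. L k b) = 0" if "deg b \<le> D + 1" for b
      using claim[of n b] hn[of b] that \<beta> by simp
    define Z where "Z = {snd (b 0) | b. f b \<noteq> 0 \<and> deg b = D}"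
    have n0: "0 < n" using n by simp
    have Zb: "snd (b 0) \<le> deg b" for b
      using deg_upd[OF n0, of b "(fst (b 0), 0)"] unfolding deg_def by simp
    have finZ: "finite Z"
      by (rule finite_subset[of _ "{..D}"]) (auto simp: Z_def intro: order.trans[OF Zb])
    have Zne: "Z \<noteq> {}" using hD unfolding Z_def by blast
    define M where "M = Max Z"
    have "M \<in> Z" unfolding M_def using finZ Zne by (rule Max_in)
    then obtain a0 where a0: "f a0 \<noteq> 0" "deg a0 = D" "snd (a0 0) = M" unfolding Z_def by blast
    have maxp: "snd (b 0) \<le> M" if "f b \<noteq> 0" "deg b = D" for b
      unfolding M_def using finZ that unfolding Z_def by (intro Max_ge) blast+
    define a1 where "a1 = a0(0 := (fst (a0 0), M + 1))"
    have deg_a1: "deg a1 = D + 1"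
      using deg_upd[OF n0, of a0 "(fst (a0 0), M + 1)"] a0 unfolding deg_def a1_def by simp
    have L0: "L 0 a1 = f a0"
    proof -
      have "lower 0 a1 = a0" unfolding lower_def a1_def using a0(3)
        by (auto simp: fun_eq_iff prod_eq_iff)
      then show ?thesis unfolding L_def a1_def by simp
    qed
    have Lk: "L k a1 = 0" if k: "k \<in> {..<n} - {0}" for k
    proof (cases "1 \<le> snd (a1 k)")
      case True
      have kn: "k < n" "k \<noteq> 0" using k by auto
      have d: "deg (lower k a1) = D" using deg_lower[of k a1] kn True deg_a1 by simp
      have s: "snd (lower k a1 0) = M + 1" unfolding lower_def a1_def using kn(2) by simp
      have "f (lower k a1) = 0"
      proof (rule ccontr)
        assume "f (lower k a1) \<noteq> 0"
        then have "snd (lower k a1 0) \<le> M" using maxp d by blast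
        then show False using s by simp
      qed
      then show ?thesis unfolding L_def by simp
    next
      case False then show ?thesis unfolding L_def by simp
    qed
    have "(\<Sum>k<n. L k a1) = L 0 a1 + (\<Sum>k\<in>{..<n}-{0}. L k a1)"
      using n0 by (subst sum.remove[of _ 0]) auto
    also have "\<dots> = f a0" using L0 Lk by simp
    finally have "(\<Sum>k<n. L k a1) = f a0" .
    then show False using sumL[of a1] deg_a1 a0(1) by simp
  qed
  have "F \<Phi> = 0" for \<Phi>
    by (rule ep_vanish[OF F]) (use fz f_def in simp)
  then show ?thesis by (simp add: fun_eq_iff)
qed



lemma bs1: "bar_setting (\<lambda>k::int. ext_act n (shiftM k)) (ext_pow n (Mfree d))"
proof
  show "0 \<in> ext_pow n (Mfree d)" by (rule ep_zero)
  show "x + y \<in> ext_pow n (Mfree d)" if "x \<in> ext_pow n (Mfree d)" "y \<in> ext_pow n (Mfree d)" for x y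
    using that by (rule ep_add)
  show "- x \<in> ext_pow n (Mfree d)" if "x \<in> ext_pow n (Mfree d)" for x
    using that by (rule ep_neg)
  show "ext_act n (shiftM g) x \<in> ext_pow n (Mfree d)" if "x \<in> ext_pow n (Mfree d)" for g x
    by (rule ext_act_ep[OF linpres_shiftM shiftM_Mfree that])
  show "ext_act n (shiftM g) (x + y) = ext_act n (shiftM g) x + ext_act n (shiftM g) y" for g x y
    by (rule ext_act_add)
  show "ext_act n (shiftM g) (ext_act n (shiftM h) x) = ext_act n (shiftM (g + h)) x" for g h x
    unfolding ext_act_comp[OF linpres_shiftM] shiftM_comp ..
qed

lemma bs2: "bar_setting (\<lambda>k::rat. ext_act n (powM k)) (ext_pow n (Mhat d))"
proof
  show "0 \<in> ext_pow n (Mhat d)" by (rule ep_zero)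
  show "x + y \<in> ext_pow n (Mhat d)" if "x \<in> ext_pow n (Mhat d)" "y \<in> ext_pow n (Mhat d)" for x y
    using that by (rule ep_add)
  show "- x \<in> ext_pow n (Mhat d)" if "x \<in> ext_pow n (Mhat d)" for x
    using that by (rule ep_neg)
  show "ext_act n (powM g) x \<in> ext_pow n (Mhat d)" if "x \<in> ext_pow n (Mhat d)" for g x
    by (rule ext_act_ep[OF linpres_powM powM_Mhat that])
  show "ext_act n (powM g) (x + y) = ext_act n (powM g) x + ext_act n (powM g) y" for g x y
    by (rule ext_act_add)
  show "ext_act n (powM g) (ext_act n (powM h) x) = ext_act n (powM (g + h)) x" for g h x
    unfolding ext_act_comp[OF linpres_powM] powM_comp ..
qed

theorem lemma6p1:
  fixes d n :: nat
  assumes "1 \<le> n"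
  shows "H1_vanishes (\<lambda>k::int. ext_act n (shiftM k)) (ext_pow n (Mfree d))
       \<and> H1_vanishes (\<lambda>\<alpha>::rat. ext_act n (powM \<alpha>)) (ext_pow n (Mhat d))"
proof
  interpret I1: bar_setting "\<lambda>k::int. ext_act n (shiftM k)" "ext_pow n (Mfree d)" by (rule bs1)
  show "H1_vanishes (\<lambda>k::int. ext_act n (shiftM k)) (ext_pow n (Mfree d))"
    unfolding H1_vanishes_def
  proof (intro allI impI)
    fix c :: "int \<Rightarrow> _" assume c: "finite {g. c g \<noteq> 0} \<and> (\<forall>g. c g \<in> ext_pow n (Mfree d)) \<and> bar_d1 (\<lambda>k. ext_act n (shiftM k)) c = 0"
    show "\<exists>e. finite {p. e p \<noteq> 0} \<and> (\<forall>p. e p \<in> ext_pow n (Mfree d)) \<and> bar_d2 (\<lambda>k. ext_act n (shiftM k)) e = c"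
    proof (rule I1.H1_vanishes_cyclic[where hh = "\<lambda>k. k"])
      show "M = 0" if "M \<in> ext_pow n (Mfree d)" "ext_act n (shiftM (- 1)) M = M" for M
        by (rule noinv1[OF assms that])
    qed (use c in auto)
  qed
next
  interpret I2: bar_setting "\<lambda>k::rat. ext_act n (powM k)" "ext_pow n (Mhat d)" by (rule bs2)
  show "H1_vanishes (\<lambda>k::rat. ext_act n (powM k)) (ext_pow n (Mhat d))"
    unfolding H1_vanishes_def
  proof (intro allI impI)
    fix c :: "rat \<Rightarrow> _" assume c: "finite {g. c g \<noteq> 0} \<and> (\<forall>g. c g \<in> ext_pow n (Mhat d)) \<and> bar_d1 (\<lambda>k. ext_act n (powM k)) c = 0"
    define S where "S = {g. c g \<noteq> 0}"
    have finS: "finite S" using c S_def by simp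
    define N where "N = (\<Prod>q\<in>S. snd (quotient_of q))"
    have Npos: "N > 0" unfolding N_def by (rule prod_pos) (simp add: quotient_of_denom_pos')
    define hh where "hh k = (of_int k / of_int N :: rat)" for k
    have hadd: "hh (a + b) = hh a + hh b" for a b unfolding hh_def by (simp add: add_divide_distrib)
    have rng: "{g. c g \<noteq> 0} \<subseteq> range hh"
    proof
      fix q assume "q \<in> {g. c g \<noteq> 0}"
      then have q: "q \<in> S" unfolding S_def .
      obtain a b where ab: "quotient_of q = (a, b)" by (cases "quotient_of q")
      have b: "b > 0" using quotient_of_denom_pos[OF ab] .
      define R where "R = (\<Prod>p\<in>S-{q}. snd (quotient_of p))"
      have R: "R > 0" unfolding R_def by (rule prod_pos) (simp add: quotient_of_denom_pos')
      have NR: "N = b * R" unfolding N_def R_def using finS q ab by (simp add: prod.remove)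
      have "q = of_int a / of_int b" by (rule quotient_of_div[OF ab])
      also have "\<dots> = of_int (a * R) / of_int N" unfolding NR using R by simp
      finally show "q \<in> range hh" unfolding hh_def by blast
    qed
    show "\<exists>e. finite {p. e p \<noteq> 0} \<and> (\<forall>p. e p \<in> ext_pow n (Mhat d)) \<and> bar_d2 (\<lambda>k. ext_act n (powM k)) e = c"
    proof (rule I2.H1_vanishes_cyclic[where hh = hh, OF hadd _ _ _ _ rng])
      show "M = 0" if "M \<in> ext_pow n (Mhat d)" "ext_act n (powM (- hh 1)) M = M" for M
      proof (rule noinv2[OF assms that(1) _ that(2)])
        show "- hh 1 \<noteq> 0" unfolding hh_def using Npos by simp
      qed
    qed (use c in auto)
  qed
qed


end
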